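(* Let $Y$ be the quotient of $(\mathbb R_{>0})^s\times E$ by a non-degenerate twisted diagonal action of $G=\mathbb Z^s\ltimes\mathcal L$ with data $(\xi_1,\dots,\xi_s)$, $\mathcal L$, $(A_1,\dots,A_s)$, and let $\mu_i\in GL(k,\mathbb Z)$ be the matrix of $A_i$ in the basis $\mathcal B$. Then (1) there is a fibration $p:Y\to\mathbb T^s$ with fiber $\mathbb T^k$ and monodromy matrices $\mu_1,\dots,\mu_s$; (2) this fibration admits a cross-section.
   Context: $E$ is a real vector space of dimension $k$ with basis $\mathcal B$; $\mathcal L$ is the free abelian group generated by $\mathcal B$. $\xi_1,\dots,\xi_s\in(\mathbb R_{>0})^s$, $\xi_i=(\xi_i^{(1)},\dots,\xi_i^{(s)})$; $A_1,\dots,A_s\in GL(E)$ commute pairwise and each restricts to an automorphism of $\mathcal L$. $G=\mathbb Z^s\ltimes\mathcal L$ with the $i$-th generator $\tau_i$ acting on $\mathcal L$ by $A_i$. The twisted diagonal action on $(\mathbb R_{>0})^s\times E$: $\mathcal L$ acts by translations on $E$, and $\tau_i(x_1,\dots,x_s,v)=(\xi_i^{(1)}x_1,\dots,\xi_i^{(s)}x_s,A_i(v))$. Non-degenerate means the vectors $(\log\xi_i^{(1)},\dots,\log\xi_i^{(s)})$, $1\le i\le s$, form a basis of $\mathbb R^s$. *)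

theory Defs
  imports "HOL-Analysis.Analysis"
begin

text \<open>Coordinates: E is identified with real^'k via the basis B (indexed by the finite type 'k),
  so L = integer vectors, and A_i is the real matrix with integer entries mu_i.
  The index set {1..s} is the finite type 's.\<close>

definition rmat :: "int^'k^'k \<Rightarrow> real^'k^'k" where
  "rmat M = (\<chi> a b. real_of_int (M $ a $ b))"

definition rvec :: "int^'k \<Rightarrow> real^'k" where
  "rvec l = (\<chi> a. real_of_int (l $ a))"

definition posE :: "((real^'s) \<times> (real^'k)) set" where
  "posE = {(x, v). \<forall>j. 0 < x $ j}"

definition tau :: "('s \<Rightarrow> real^'s) \<Rightarrow> ('s \<Rightarrow> int^'k^'k) \<Rightarrow> 's
                   \<Rightarrow> (real^'s) \<times> (real^'k) \<Rightarrow> (real^'s) \<times> (real^'k)" where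
  "tau \<xi> \<mu> i p = ((\<chi> j. \<xi> i $ j * fst p $ j), rmat (\<mu> i) *v snd p)"

text \<open>One-step relation given by the generators of G = Z^s \<ltimes> L acting on (R_{>0})^s x E;
  its equivalence closure is the orbit relation of G.\<close>
definition twisted_gen :: "('s \<Rightarrow> real^'s) \<Rightarrow> ('s \<Rightarrow> int^'k^'k)
     \<Rightarrow> (real^'s) \<times> (real^'k) \<Rightarrow> (real^'s) \<times> (real^'k) \<Rightarrow> bool" where
  "twisted_gen \<xi> \<mu> p q \<longleftrightarrow> p \<in> posE \<and>
     ((\<exists>i. q = tau \<xi> \<mu> i p) \<or> (\<exists>l::int^'k. q = (fst p, snd p + rvec l)))"

definition twisted_orbit_rel where
  "twisted_orbit_rel \<xi> \<mu> = equivclp (twisted_gen \<xi> \<mu>)"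

definition nondegenerate :: "('s \<Rightarrow> real^'s) \<Rightarrow> bool" where
  "nondegenerate \<xi> \<longleftrightarrow>
     (let L = (\<lambda>i. \<chi> j. ln (\<xi> i $ j)) in inj L \<and> independent (range L) \<and> span (range L) = UNIV)"

text \<open>The torus T^s, realised as a product of unit circles in complex^'s, with the
  covering map R^s \<rightarrow> T^s.\<close>
definition texp :: "real^'s \<Rightarrow> complex^'s" where
  "texp t = (\<chi> i. cis (2 * pi * t $ i))"

definition torus :: "(complex^'s) topology" where
  "torus = subtopology euclidean (range texp)"

text \<open>The standard (flat) T^k-bundle over T^s with monodromy matrices mu_1,...,mu_s:
  the quotient of R^s x R^k by (t,v) ~ (t + e_i, mu_i v) and (t,v) ~ (t, v + l), l in Z^k,
  projecting to T^s via [t,v] |-> texp t.\<close>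
definition model_gen :: "('s \<Rightarrow> int^'k^'k)
     \<Rightarrow> (real^'s) \<times> (real^'k) \<Rightarrow> (real^'s) \<times> (real^'k) \<Rightarrow> bool" where
  "model_gen \<mu> p q \<longleftrightarrow>
     (\<exists>i. q = (fst p + axis i 1, rmat (\<mu> i) *v snd p)) \<or> (\<exists>l::int^'k. q = (fst p, snd p + rvec l))"

definition model_rel where
  "model_rel \<mu> = equivclp (model_gen \<mu>)"

text \<open>p : Y \<rightarrow> T^s is a fibration with fiber T^k and monodromy matrices mu_i: it is isomorphic
  over T^s to the standard bundle above, i.e. there is a quotient map Q : R^s x R^k \<rightarrow> Y whose
  fibres are exactly the classes of model_rel and with p (Q (t,v)) = texp t.\<close>
definition torus_fibration_with_monodromy ::
  "'y topology \<Rightarrow> ('y \<Rightarrow> complex^'s) \<Rightarrow> ('s \<Rightarrow> int^'k^'k) \<Rightarrow> bool" where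
  "torus_fibration_with_monodromy Y p \<mu> \<longleftrightarrow>
     continuous_map Y torus p \<and>
     (\<exists>Q :: (real^'s) \<times> (real^'k) \<Rightarrow> 'y.
        quotient_map euclidean Y Q \<and>
        (\<forall>a b. Q a = Q b \<longleftrightarrow> model_rel \<mu> a b) \<and>
        (\<forall>t v. p (Q (t, v)) = texp t))"

definition has_cross_section :: "'y topology \<Rightarrow> ('y \<Rightarrow> complex^'s) \<Rightarrow> bool" where
  "has_cross_section Y p \<longleftrightarrow>
     (\<exists>\<sigma>. continuous_map torus Y \<sigma> \<and> (\<forall>z\<in>topspace torus. p (\<sigma> z) = z))"

end

theory Submission
  imports Defs
begin

lemma equivclp_map:
  assumes "equivclp r x y" "\<And>a b. r a b \<Longrightarrow> r' (f a) (f b)"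
  shows "equivclp r' (f x) (f y)"
proof -
  have "(symclp r)\<^sup>*\<^sup>* x y" using assms(1) by (simp add: equivclp_def)
  then have "(symclp r')\<^sup>*\<^sup>* (f x) (f y)"
  proof (induction rule: rtranclp_induct)
    case base then show ?case by simp
  next
    case (step y z)
    have "symclp r' (f y) (f z)" using step(2) assms(2) by (auto simp: symclp_def)
    then show ?case using step(3) by (meson rtranclp.rtrancl_into_rtrancl)
  qed
  then show ?thesis by (simp add: equivclp_def)
qed

lemma equivclp_inv:
  assumes "equivclp r x y" "\<And>a b. r a b \<Longrightarrow> f a = f b"
  shows "f x = f y"
proof -
  have "(symclp r)\<^sup>*\<^sup>* x y" using assms(1) by (simp add: equivclp_def)
  then show ?thesis
  proof (induction rule: rtranclp_induct)
    case base then show ?case by simp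
  next
    case (step y z)
    then show ?case using assms(2) by (auto simp: symclp_def)
  qed
qed

lemma equivclp_base: "r x y \<Longrightarrow> equivclp r x y"
  by (simp add: equivclp_def symclp_def r_into_rtranclp)

lemma equivclp_trans: "equivclp r x y \<Longrightarrow> equivclp r y z \<Longrightarrow> equivclp r x z"
  by (rule transpD[OF transp_equivclp])

lemma cis_shift_int: "cis (2 * pi * (a + real_of_int m)) = cis (2 * pi * a)"
proof -
  have "cis (2 * pi * (a + real_of_int m)) = cis (2 * pi * a) * cis (2 * pi * real_of_int m)"
    by (simp only: cis_mult distrib_left)
  also have "cis (2 * pi * real_of_int m) = 1" by (rule cis_multiple_2pi) simp
  finally show ?thesis by simp
qed

lemma cis_eq_int:
  assumes "cis (2 * pi * a) = cis (2 * pi * b)"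
  shows "\<exists>m::int. b = a + real_of_int m"
proof -
  have "exp (\<i> * complex_of_real (2 * pi * b)) = exp (\<i> * complex_of_real (2 * pi * a))"
    using assms by (simp add: cis_conv_exp)
  then obtain n :: int where n: "\<i> * complex_of_real (2 * pi * b) = \<i> * complex_of_real (2 * pi * a) + complex_of_real (real_of_int (2 * n) * pi) * \<i>"
    unfolding exp_eq by blast
  have "\<i> * complex_of_real (2 * pi * b) = \<i> * complex_of_real (2 * pi * a + real_of_int (2 * n) * pi)"
    unfolding n by (simp only: of_real_add distrib_left mult.commute)
  then have "complex_of_real (2 * pi * b) = complex_of_real (2 * pi * a + real_of_int (2 * n) * pi)"
    by (simp only: mult_cancel_left complex_i_not_zero simp_thms)
  then have "2 * pi * b = 2 * pi * a + real_of_int (2 * n) * pi" using of_real_eq_iff by blast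
  then have "2 * pi * b = 2 * pi * (a + real_of_int n)" by (simp add: algebra_simps)
  then have "b = a + real_of_int n" using pi_gt_zero by simp
  then show ?thesis by blast
qed

lemma texp_shift: "texp (t + (\<chi> i. real_of_int (n $ i))) = texp t"
  by (simp add: texp_def cis_shift_int vec_eq_iff)

lemma texp_eq:
  assumes "texp t = texp t'"
  shows "\<exists>n::int^'s. t' = t + (\<chi> i. real_of_int (n $ i))"
proof -
  have "\<exists>m::int. t' $ i = t $ i + real_of_int m" for i
  proof -
    have "texp t $ i = texp t' $ i" using assms by simp
    then have "cis (2 * pi * t $ i) = cis (2 * pi * t' $ i)" by (simp add: texp_def)
    then show ?thesis by (rule cis_eq_int)
  qed
  then obtain m where "\<And>i. t' $ i = t $ i + real_of_int (m i)" by metis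
  then have "t' = t + (\<chi> i. real_of_int ((\<chi> i. m i) $ i))" by (simp add: vec_eq_iff)
  then show ?thesis by blast
qed

lemma model_rel_axis: "model_rel \<mu> (t, 0) (t + axis i 1, 0)"
proof -
  have "model_gen \<mu> (t, 0) (t + axis i 1, 0)"
    unfolding model_gen_def by (rule disjI1, rule exI[of _ i]) simp
  then show ?thesis unfolding model_rel_def by (rule equivclp_base)
qed

lemma equivclp_refl: "equivclp r x x"
  by (simp add: equivclp_def)

lemma model_rel_axis_nat: "model_rel \<mu> (t, 0) (t + real n *\<^sub>R axis i 1, 0)"
proof (induction n arbitrary: t)
  case 0 then show ?case by (simp add: model_rel_def equivclp_refl)
next
  case (Suc n)
  have eq: "t + real n *\<^sub>R axis i 1 + axis i 1 = t + real (Suc n) *\<^sub>R axis i 1"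
    by (simp add: algebra_simps)
  have a: "model_rel \<mu> (t, 0) (t + real n *\<^sub>R axis i 1, 0)" by (rule Suc.IH)
  have b: "model_rel \<mu> (t + real n *\<^sub>R axis i 1, 0) (t + real (Suc n) *\<^sub>R axis i 1, 0)"
    unfolding eq[symmetric] by (rule model_rel_axis)
  show ?case using a b unfolding model_rel_def by (rule equivclp_trans)
qed

lemma model_rel_axis_int: "model_rel \<mu> (t, 0) (t + real_of_int m *\<^sub>R axis i 1, 0)"
proof (cases "m \<ge> 0")
  case True
  have "model_rel \<mu> (t, 0) (t + real (nat m) *\<^sub>R axis i 1, 0)" by (rule model_rel_axis_nat)
  then show ?thesis using True by simp
next
  case False
  then have e: "real (nat (-m)) = - real_of_int m" by simp
  have eq: "t + real_of_int m *\<^sub>R axis i 1 + real (nat (-m)) *\<^sub>R axis i 1 = t"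
    unfolding e by (simp add: algebra_simps)
  have "model_rel \<mu> (t + real_of_int m *\<^sub>R axis i 1, 0) (t + real_of_int m *\<^sub>R axis i 1 + real (nat (-m)) *\<^sub>R axis i 1, 0)"
    by (rule model_rel_axis_nat)
  then have "model_rel \<mu> (t + real_of_int m *\<^sub>R axis i 1, 0) (t, 0)" unfolding eq .
  then show ?thesis unfolding model_rel_def by (rule equivclp_sym)
qed

lemma model_rel_int_vec:
  fixes n :: "int^'s::finite" and t :: "real^'s" and \<mu> :: "'s \<Rightarrow> int^'k::finite^'k"
  shows "model_rel \<mu> (t, 0) (t + (\<chi> i. real_of_int (n $ i)), 0)"
proof -
  have "model_rel \<mu> (t, 0) (t + (\<chi> i. if i \<in> F then real_of_int (n $ i) else 0), 0)" if "finite F" for F :: "'s set" and t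
    using that
  proof (induction F arbitrary: t rule: finite_induct)
    case empty
    have "(\<chi> i. if i \<in> {} then real_of_int (n $ i) else 0) = (0::real^'s)" by (simp add: vec_eq_iff)
    then show ?case by (simp add: model_rel_def equivclp_refl)
  next
    case (insert i F t)
    have a: "model_rel \<mu> (t, 0) (t + (\<chi> j. if j \<in> F then real_of_int (n $ j) else 0), 0)" by (rule insert(3))
    have b: "model_rel \<mu> (t + (\<chi> j. if j \<in> F then real_of_int (n $ j) else 0), 0)
       (t + (\<chi> j. if j \<in> F then real_of_int (n $ j) else 0) + real_of_int (n $ i) *\<^sub>R axis i 1, 0)"
      by (rule model_rel_axis_int)
    have eq: "t + (\<chi> j. if j \<in> F then real_of_int (n $ j) else 0) + real_of_int (n $ i) *\<^sub>R axis i 1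
       = t + (\<chi> j. if j \<in> insert i F then real_of_int (n $ j) else 0)"
      using insert(2) by (simp add: vec_eq_iff axis_def)
    have "model_rel \<mu> (t, 0) (t + (\<chi> j. if j \<in> F then real_of_int (n $ j) else 0) + real_of_int (n $ i) *\<^sub>R axis i 1, 0)"
      using a b unfolding model_rel_def by (rule equivclp_trans)
    then show ?case unfolding eq .
  qed
  from this[of UNIV t] show ?thesis by simp
qed

lemma main_aux:
  fixes \<xi> :: "'s::finite \<Rightarrow> real^'s"
    and \<mu> :: "'s \<Rightarrow> int^'k::finite^'k"
    and Y :: "'y topology"
    and q :: "(real^'s) \<times> (real^'k) \<Rightarrow> 'y"
  assumes xi_pos: "\<And>i j. 0 < \<xi> i $ j"
    and nondeg: "nondegenerate \<xi>"
    and quot: "quotient_map (subtopology euclidean posE) Y q"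
    and fibres: "\<And>a b. a \<in> posE \<Longrightarrow> b \<in> posE \<Longrightarrow> (q a = q b \<longleftrightarrow> twisted_orbit_rel \<xi> \<mu> a b)"
  shows "\<exists>Q :: (real^'s) \<times> (real^'k) \<Rightarrow> 'y.
        quotient_map euclidean Y Q \<and> (\<forall>a b. Q a = Q b \<longleftrightarrow> model_rel \<mu> a b)"
proof -
  define L where "L = (\<lambda>i. \<chi> j. ln (\<xi> i $ j))"
  define F where "F = (\<lambda>t::real^'s. \<Sum>i\<in>UNIV. t $ i *\<^sub>R L i)"
  have injL: "inj L" and spanL: "span (range L) = UNIV"
    using nondeg unfolding nondegenerate_def L_def Let_def by auto
  have linF: "linear F" unfolding F_def
    by (rule linearI) (simp_all add: sum.distrib scaleR_add_left scaleR_sum_right)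
  have surjF: "surj F"
  proof -
    { fix w :: "real^'s"
      have "w \<in> span (range L)" using spanL by simp
      then obtain u where u: "w = (\<Sum>v\<in>range L. u v *\<^sub>R v)"
        using span_finite[of "range L"] by auto
      also have "\<dots> = (\<Sum>i\<in>UNIV. u (L i) *\<^sub>R L i)"
        using sum.reindex[OF injL, of "\<lambda>v. u v *\<^sub>R v"] by simp
      also have "\<dots> = F (\<chi> i. u (L i))" by (simp add: F_def)
      finally have "w \<in> range F" by blast }
    then show ?thesis by blast
  qed
  obtain G where linG: "linear G" and GF: "\<And>x. G (F x) = x" and FG: "\<And>x. F (G x) = x"
    using linear_surjective_isomorphism[OF linF surjF] by auto
  have F_axis: "F (t + axis i 1) = F t + L i" for t i
  proof -
    have "F (axis i 1) = (\<Sum>ia\<in>UNIV. if ia = i then L ia else 0)" unfolding F_def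
      by (rule sum.cong) (auto simp: axis_def)
    also have "\<dots> = L i" by (simp add: sum.delta')
    finally have "F (axis i 1) = L i" .
    then show ?thesis using linear_add[OF linF] by simp
  qed
  define \<Phi> where "\<Phi> = (\<lambda>(t::real^'s, v::real^'k). ((\<chi> j. exp (F t $ j)), v))"
  define \<psi> where "\<psi> = (\<lambda>(x::real^'s, v::real^'k). (G (\<chi> j. ln (x $ j)), v))"
  have \<Phi>_pos: "\<Phi> a \<in> posE" for a
    by (auto simp: \<Phi>_def posE_def split: prod.splits)
  have \<psi>\<Phi>: "\<psi> (\<Phi> a) = a" for a
  proof -
    have "(\<chi> j. ln (exp (F t $ j))) = F t" for t by (simp add: vec_eq_iff)
    then show ?thesis by (cases a) (simp add: \<Phi>_def \<psi>_def GF)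
  qed
  have \<Phi>\<psi>: "\<Phi> (\<psi> p) = p" if "p \<in> posE" for p
  proof -
    obtain x v where p: "p = (x, v)" by fastforce
    have "\<forall>j. 0 < x $ j" using that p by (simp add: posE_def)
    then have "(\<chi> j. exp ((\<chi> j. ln (x $ j)) $ j)) = x" by (simp add: vec_eq_iff)
    then show ?thesis by (simp add: p \<Phi>_def \<psi>_def FG)
  qed
  have tau\<Phi>: "tau \<xi> \<mu> i (\<Phi> (t, v)) = \<Phi> (t + axis i 1, rmat (\<mu> i) *v v)" for i t v
  proof -
    have "(\<chi> j. \<xi> i $ j * exp (F t $ j)) = (\<chi> j. exp ((F t + L i) $ j))"
      using xi_pos by (simp add: vec_eq_iff L_def exp_add)
    then show ?thesis by (simp add: tau_def \<Phi>_def F_axis)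
  qed
  have shift\<Phi>: "(fst (\<Phi> (t, v)), snd (\<Phi> (t, v)) + w) = \<Phi> (t, v + w)" for t v w
    by (simp add: \<Phi>_def)
  have inj\<Phi>: "inj \<Phi>" using \<psi>\<Phi> by (metis injI)
  have gen1: "model_gen \<mu> a b \<Longrightarrow> twisted_gen \<xi> \<mu> (\<Phi> a) (\<Phi> b)" for a b
    unfolding model_gen_def twisted_gen_def
    by (cases a) (auto simp: \<Phi>_pos tau\<Phi> shift\<Phi>)
  have gen2: "twisted_gen \<xi> \<mu> p r \<Longrightarrow> model_gen \<mu> (\<psi> p) (\<psi> r)" for p r
  proof -
    assume h: "twisted_gen \<xi> \<mu> p r"
    then have pE: "p \<in> posE" by (simp add: twisted_gen_def)
    obtain t v where tv: "\<psi> p = (t, v)" by fastforce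
    have pp: "p = \<Phi> (t, v)" using \<Phi>\<psi>[OF pE] tv by simp
    from h consider i where "r = tau \<xi> \<mu> i p" | l where "r = (fst p, snd p + rvec l)"
      unfolding twisted_gen_def by blast
    then show ?thesis
    proof cases
      case (1 i)
      then have "\<psi> r = (t + axis i 1, rmat (\<mu> i) *v v)" using pp tau\<Phi> \<psi>\<Phi> by simp
      then show ?thesis using tv unfolding model_gen_def by auto
    next
      case (2 l)
      then have "\<psi> r = (t, v + rvec l)" using pp shift\<Phi> \<psi>\<Phi> by simp
      then show ?thesis using tv unfolding model_gen_def by auto
    qed
  qed
  define Q where "Q = q \<circ> \<Phi>"
  have Qrel: "Q a = Q b \<longleftrightarrow> model_rel \<mu> a b" for a b
  proof
    assume "Q a = Q b"
    then have "twisted_orbit_rel \<xi> \<mu> (\<Phi> a) (\<Phi> b)" using fibres \<Phi>_pos by (simp add: Q_def)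
    then have "equivclp (model_gen \<mu>) (\<psi> (\<Phi> a)) (\<psi> (\<Phi> b))"
      unfolding twisted_orbit_rel_def using gen2 by (rule equivclp_map)
    then show "model_rel \<mu> a b" by (simp add: \<psi>\<Phi> model_rel_def)
  next
    assume "model_rel \<mu> a b"
    then have "equivclp (twisted_gen \<xi> \<mu>) (\<Phi> a) (\<Phi> b)"
      unfolding model_rel_def using gen1 by (rule equivclp_map)
    then show "Q a = Q b" using fibres \<Phi>_pos by (simp add: Q_def twisted_orbit_rel_def)
  qed
  have contF: "continuous_on UNIV F"
    by (rule linear_continuous_on) (simp add: linF[unfolded linear_conv_bounded_linear])
  have contG: "continuous_on UNIV G"
    by (rule linear_continuous_on) (simp add: linG[unfolded linear_conv_bounded_linear])
  have "homeomorphic_maps euclidean (subtopology euclidean posE) \<Phi> \<psi>"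
    unfolding homeomorphic_maps_def
  proof (intro conjI ballI)
    show "continuous_map euclidean (subtopology euclidean posE) \<Phi>"
    proof (rule continuous_map_into_subtopology)
      show "\<Phi> \<in> topspace euclidean \<rightarrow> posE" using \<Phi>_pos by auto
      have cF: "continuous_on UNIV (\<lambda>z::(real^'s) \<times> (real^'k). F (fst z))"
        by (rule continuous_on_compose2[OF contF]) (auto intro: continuous_on_fst continuous_on_id)
      have "continuous_on UNIV (\<lambda>z::(real^'s) \<times> (real^'k). ((\<chi> j. exp (F (fst z) $ j)), snd z))"
        by (intro continuous_on_Pair continuous_on_vec_lambda continuous_on_exp continuous_on_component
           continuous_on_snd continuous_on_id cF)
      moreover have "\<Phi> = (\<lambda>z. ((\<chi> j. exp (F (fst z) $ j)), snd z))"
        by (auto simp: \<Phi>_def)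
      ultimately show "continuous_map euclidean euclidean \<Phi>" by simp
    qed
    show "continuous_map (subtopology euclidean posE) euclidean \<psi>"
    proof -
      have pos_ne: "\<forall>x\<in>(posE :: ((real^'s) \<times> (real^'k)) set). fst x $ j \<noteq> 0" for j :: 's
      proof
        fix x :: "(real^'s) \<times> (real^'k)" assume "x \<in> posE"
        then have "0 < fst x $ j" by (auto simp: posE_def split: prod.splits)
        then show "fst x $ j \<noteq> 0" by simp
      qed
      have cl: "continuous_on posE (\<lambda>z::(real^'s) \<times> (real^'k). (\<chi> j. ln (fst z $ j)))"
        by (intro continuous_on_vec_lambda continuous_on_ln continuous_on_component
           continuous_on_fst continuous_on_id pos_ne)
      have cG: "continuous_on posE (\<lambda>z::(real^'s) \<times> (real^'k). G (\<chi> j. ln (fst z $ j)))"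
        by (rule continuous_on_compose2[OF contG cl]) auto
      have "continuous_on posE (\<lambda>z::(real^'s) \<times> (real^'k). (G (\<chi> j. ln (fst z $ j)), snd z))"
        by (intro continuous_on_Pair cG continuous_on_snd continuous_on_id)
      moreover have "\<psi> = (\<lambda>z. (G (\<chi> j. ln (fst z $ j)), snd z))"
        by (auto simp: \<psi>_def)
      ultimately show ?thesis by simp
    qed
  qed (auto simp: \<psi>\<Phi> \<Phi>\<psi>)
  then have "quotient_map euclidean (subtopology euclidean posE) \<Phi>"
    using homeomorphic_map_def homeomorphic_maps_imp_map by blast
  then have "quotient_map euclidean Y Q"
    unfolding Q_def using quot by (rule quotient_map_compose)
  then show ?thesis using Qrel by blast
qed


lemma texp_axis: "texp (t + axis i 1) = texp t"
proof -
  have "t + axis i 1 = t + (\<chi> j. real_of_int ((axis i (1::int)) $ j))"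
    by (simp add: vec_eq_iff axis_def)
  then show ?thesis using texp_shift by metis
qed

lemma model_texp:
  assumes "model_rel \<mu> a b"
  shows "texp (fst a) = texp (fst b)"
proof -
  have "(texp \<circ> fst) a = (texp \<circ> fst) b"
    using assms unfolding model_rel_def
  proof (rule equivclp_inv)
    fix x y assume "model_gen \<mu> x y"
    then consider i where "y = (fst x + axis i 1, rmat (\<mu> i) *v snd x)"
      | l where "y = (fst x, snd x + rvec l)" unfolding model_gen_def by blast
    then show "(texp \<circ> fst) x = (texp \<circ> fst) y"
      by cases (simp_all add: texp_axis)
  qed
  then show ?thesis by simp
qed

lemma cont_texp: "continuous_on UNIV texp"
  unfolding texp_def
  by (intro continuous_on_vec_lambda continuous_on_cis continuous_on_mult continuous_on_const
      continuous_on_component continuous_on_id)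

lemma texp_frac: "texp t \<in> texp ` cbox 0 1"
proof -
  have "(\<chi> i. frac (t $ i)) = t + (\<chi> i. real_of_int ((\<chi> i. - floor (t $ i)) $ i))"
    by (simp add: vec_eq_iff frac_def)
  then have "texp (\<chi> i. frac (t $ i)) = texp t" using texp_shift by metis
  moreover have "(\<chi> i. frac (t $ i)) \<in> cbox 0 1"
    by (simp add: mem_box_cart frac_ge_0 less_imp_le frac_lt_1)
  ultimately show ?thesis by (metis image_eqI)
qed

theorem proposition2p5:
  fixes \<xi> :: "'s::finite \<Rightarrow> real^'s"
    and \<mu> :: "'s \<Rightarrow> int^'k::finite^'k"
    and Y :: "'y topology"
    and q :: "(real^'s) \<times> (real^'k) \<Rightarrow> 'y"
  assumes xi_pos: "\<And>i j. 0 < \<xi> i $ j"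
    and mu_GL: "\<And>i. is_unit (det (\<mu> i))"
    and mu_comm: "\<And>i j. \<mu> i ** \<mu> j = \<mu> j ** \<mu> i"
    and nondeg: "nondegenerate \<xi>"
    and quot: "quotient_map (subtopology euclidean posE) Y q"
    and fibres: "\<And>a b. a \<in> posE \<Longrightarrow> b \<in> posE \<Longrightarrow> (q a = q b \<longleftrightarrow> twisted_orbit_rel \<xi> \<mu> a b)"
  shows "\<exists>p. torus_fibration_with_monodromy Y p \<mu> \<and> has_cross_section Y p"
proof -
  obtain Q :: "(real^'s) \<times> (real^'k) \<Rightarrow> 'y" where Qq: "quotient_map euclidean Y Q"
    and Qrel: "\<And>a b. Q a = Q b \<longleftrightarrow> model_rel \<mu> a b"
    using main_aux[OF xi_pos nondeg quot fibres] by blast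
  define p where "p y = texp (fst (SOME a. Q a = y))" for y
  have pQ: "p (Q (t, v)) = texp t" for t v
  proof -
    have "Q (SOME a. Q a = Q (t, v)) = Q (t, v)" by (rule someI) (rule refl)
    then have "model_rel \<mu> (SOME a. Q a = Q (t, v)) (t, v)" using Qrel by blast
    then show ?thesis unfolding p_def by (metis model_texp fst_conv)
  qed
  have ct: "continuous_map euclidean torus texp"
    unfolding torus_def using cont_texp
    by (intro continuous_map_into_subtopology) auto
  have cp: "continuous_map Y torus p"
  proof (rule continuous_compose_quotient_map[OF Qq])
    have "continuous_on UNIV (\<lambda>z::(real^'s)\<times>(real^'k). texp (fst z))"
      by (rule continuous_on_compose2[OF cont_texp]) (auto intro: continuous_on_fst continuous_on_id)
    then have "continuous_map euclidean torus (\<lambda>z::(real^'s)\<times>(real^'k). texp (fst z))"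
      unfolding torus_def by (intro continuous_map_into_subtopology) auto
    moreover have "p (Q z) = texp (fst z)" for z by (metis pQ prod.collapse)
    ultimately show "continuous_map euclidean torus (p \<circ> Q)"
      by (metis (no_types, lifting) continuous_map_eq comp_apply)
  qed
  define \<sigma> where "\<sigma> z = Q (SOME t. texp t = z, 0)" for z :: "complex^'s"
  have \<sigma>texp: "\<sigma> (texp t) = Q (t, 0)" for t
  proof -
    define t' where "t' = (SOME t'. texp t' = texp t)"
    have "texp t' = texp t" unfolding t'_def by (rule someI) (rule refl)
    then obtain n where n: "t = t' + (\<chi> i. real_of_int (n $ i))" using texp_eq by metis
    have "model_rel \<mu> (t', 0) (t, 0)" unfolding n by (rule model_rel_int_vec)
    then show ?thesis using Qrel unfolding \<sigma>_def t'_def by blast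
  qed
  define X where "X = subtopology euclidean (cbox (0::real^'s) 1)"
  have topT: "topspace torus = range texp" by (simp add: torus_def)
  have qt: "quotient_map X torus texp"
  proof (rule continuous_imp_quotient_map)
    show "continuous_map X torus texp" unfolding X_def by (rule continuous_map_from_subtopology[OF ct])
    show "compact_space X" unfolding X_def
      by (rule compact_space_subtopology) (simp add: compactin_euclidean_iff compact_cbox)
    show "Hausdorff_space torus" unfolding torus_def
      by (rule Hausdorff_space_subtopology) simp
    show "texp ` topspace X = topspace torus"
      unfolding topT X_def using texp_frac by auto
  qed
  have cs: "continuous_map torus Y \<sigma>"
  proof (rule continuous_compose_quotient_map[OF qt])
    have "continuous_on UNIV (\<lambda>t::real^'s. (t, 0::real^'k))"
      by (intro continuous_on_Pair continuous_on_id continuous_on_const)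
    then have "continuous_map euclidean euclidean (\<lambda>t::real^'s. (t, 0::real^'k))" by simp
    then have "continuous_map X Y (Q \<circ> (\<lambda>t::real^'s. (t, 0::real^'k)))"
      unfolding X_def
      by (intro continuous_map_compose[OF _ quotient_imp_continuous_map[OF Qq]] continuous_map_from_subtopology)
    then show "continuous_map X Y (\<sigma> \<circ> texp)"
      by (rule continuous_map_eq) (simp add: \<sigma>texp)
  qed
  have "has_cross_section Y p"
    unfolding has_cross_section_def
  proof (intro exI conjI ballI)
    show "continuous_map torus Y \<sigma>" by (rule cs)
    fix z :: "complex^'s" assume "z \<in> topspace torus"
    then obtain t where "z = texp t" using topT by auto
    then show "p (\<sigma> z) = z" by (simp add: \<sigma>texp pQ)
  qed
  moreover have "torus_fibration_with_monodromy Y p \<mu>"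
    unfolding torus_fibration_with_monodromy_def using cp Qq Qrel pQ by blast
  ultimately show ?thesis by blast
qed

end
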